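(* Let $|\psi\rangle$ be a pure three-qubit state with two-qubit reduced states $\rho_{AB},\rho_{AC},\rho_{BC}$. Then $S_{AB}>S_{AC}>S_{BC}$ if and only if $\mathcal C_{AB}>\mathcal C_{AC}>\mathcal C_{BC}$.
   Context: For a two-qubit state $\rho$ let $t_{kl}=\mathrm{Tr}[\rho\,\sigma_k\otimes\sigma_l]$ ($\sigma_k$ Pauli matrices) and $S(\rho)=\sum_{k,l=1}^3 t_{kl}^2$; $S_{ij}=S(\rho_{ij})$. $\mathcal C_{ij}$ denotes the (Wootters) concurrence of $\rho_{ij}$: $\mathcal C(\rho)=\max\{0,\lambda_1-\lambda_2-\lambda_3-\lambda_4\}$, where $\lambda_1\ge\dots\ge\lambda_4$ are the square roots of the eigenvalues of $\rho(\sigma_2\otimes\sigma_2)\rho^*(\sigma_2\otimes\sigma_2)$. *)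

theory Defs
  imports "Jordan_Normal_Form.Char_Poly" "HOL-Computational_Algebra.Polynomial"
begin

(* Three-qubit pure state: psi is a complex vector of dimension 8, with
   computational basis index 4*a + 2*b + c for qubits A,B,C (a,b,c in {0,1}).
   Two-qubit operators are 4x4 complex matrices with basis index 2*i + j. *)

definition tr :: "complex mat \<Rightarrow> complex" where
  "tr M = (\<Sum>i<dim_row M. M $$ (i, i))"

definition pauli :: "nat \<Rightarrow> complex mat" where
  "pauli k = (if k = 1 then mat_of_rows_list 2 [[0, 1], [1, 0]]
              else if k = 2 then mat_of_rows_list 2 [[0, -\<i>], [\<i>, 0]]
              else if k = 3 then mat_of_rows_list 2 [[1, 0], [0, -1]]
              else 1\<^sub>m 2)"

definition kron2 :: "complex mat \<Rightarrow> complex mat \<Rightarrow> complex mat" where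
  "kron2 A B = mat 4 4 (\<lambda>(r, s). A $$ (r div 2, s div 2) * B $$ (r mod 2, s mod 2))"

definition rho_AB :: "complex vec \<Rightarrow> complex mat" where
  "rho_AB psi = mat 4 4 (\<lambda>(r, s). \<Sum>c<2. psi $ (2 * r + c) * cnj (psi $ (2 * s + c)))"

definition rho_AC :: "complex vec \<Rightarrow> complex mat" where
  "rho_AC psi = mat 4 4 (\<lambda>(r, s). \<Sum>b<2.
      psi $ (4 * (r div 2) + 2 * b + r mod 2) * cnj (psi $ (4 * (s div 2) + 2 * b + s mod 2)))"

definition rho_BC :: "complex vec \<Rightarrow> complex mat" where
  "rho_BC psi = mat 4 4 (\<lambda>(r, s). \<Sum>a<2. psi $ (4 * a + r) * cnj (psi $ (4 * a + s)))"

(* correlation tensor t_kl = Tr[rho sigma_k (x) sigma_l]  (real for Hermitian rho) *)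
definition corr :: "complex mat \<Rightarrow> nat \<Rightarrow> nat \<Rightarrow> real" where
  "corr \<rho> k l = Re (tr (\<rho> * kron2 (pauli k) (pauli l)))"

definition S_corr :: "complex mat \<Rightarrow> real" where
  "S_corr \<rho> = (\<Sum>k\<in>{1..3}. \<Sum>l\<in>{1..3}. (corr \<rho> k l)\<^sup>2)"

definition spin_flip :: "complex mat \<Rightarrow> complex mat" where
  "spin_flip \<rho> = \<rho> * kron2 (pauli 2) (pauli 2) * map_mat cnj \<rho> * kron2 (pauli 2) (pauli 2)"

(* square roots of the eigenvalues (with multiplicity) of rho*rho~, in increasing order;
   these eigenvalues are real and nonnegative for a density matrix *)
definition wootters_lambdas :: "complex mat \<Rightarrow> real list" where
  "wootters_lambdas \<rho> =
     sorted_list_of_multiset (image_mset (\<lambda>z. sqrt (Re z)) (proots (char_poly (spin_flip \<rho>))))"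

definition concurrence :: "complex mat \<Rightarrow> real" where
  "concurrence \<rho> = (let l = wootters_lambdas \<rho> in
      max 0 (l ! 3 - l ! 2 - l ! 1 - l ! 0))"

end

theory Submission
  imports Defs
begin

definition sig :: "complex mat" where "sig = kron2 (pauli 2) (pauli 2)"

lemma sig_carrier[simp]: "sig \<in> carrier_mat 4 4" by (simp add: sig_def kron2_def)
lemma sig_dims[simp]: "dim_row sig = 4" "dim_col sig = 4" by (simp_all add: sig_def kron2_def)

lemma sig_idx[simp]:
  "sig $$ (0,0) = 0"
  "sig $$ (0,1) = 0"
  "sig $$ (0,2) = 0"
  "sig $$ (0,3) = -1"
  "sig $$ (1,0) = 0"
  "sig $$ (1,1) = 0"
  "sig $$ (1,2) = 1"
  "sig $$ (1,3) = 0"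
  "sig $$ (2,0) = 0"
  "sig $$ (2,1) = 1"
  "sig $$ (2,2) = 0"
  "sig $$ (2,3) = 0"
  "sig $$ (3,0) = -1"
  "sig $$ (3,1) = 0"
  "sig $$ (3,2) = 0"
  "sig $$ (3,3) = 0"
  "sig $$ (0,Suc 0) = 0"
  "sig $$ (Suc 0,0) = 0"
  "sig $$ (Suc 0,Suc 0) = 0"
  "sig $$ (Suc 0,2) = 1"
  "sig $$ (Suc 0,3) = 0"
  "sig $$ (2,Suc 0) = 1"
  "sig $$ (3,Suc 0) = 0"
  by (simp_all add: sig_def kron2_def pauli_def mat_of_rows_list_def)

lemma sum4: "(\<Sum>i<(4::nat). f i) = f 0 + f 1 + f 2 + (f 3 :: 'a::comm_monoid_add)"
  by (simp add: eval_nat_numeral add.assoc)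
lemma sum4': "(\<Sum>i\<in>{0..<(4::nat)}. f i) = f 0 + f 1 + f 2 + (f 3 :: 'a::comm_monoid_add)"
  by (simp add: eval_nat_numeral atLeast0LessThan add.assoc)
lemma sum2: "(\<Sum>i<(2::nat). f i) = f 0 + (f 1 :: 'a::comm_monoid_add)"
  by (simp add: eval_nat_numeral)
lemma sum2': "(\<Sum>i\<in>{0..<(2::nat)}. f i) = f 0 + (f 1 :: 'a::comm_monoid_add)"
  by (simp add: eval_nat_numeral atLeast0LessThan)

definition adjm :: "complex mat \<Rightarrow> complex mat" where
  "adjm M = mat (dim_col M) (dim_row M) (\<lambda>(i,j). cnj (M $$ (j,i)))"

definition nN :: "complex mat \<Rightarrow> nat \<Rightarrow> nat \<Rightarrow> complex" where
  "nN M a b = (\<Sum>s<4. \<Sum>t<4. M $$ (s,a) * sig $$ (s,t) * M $$ (t,b))"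

definition uu :: "complex mat \<Rightarrow> nat \<Rightarrow> nat \<Rightarrow> complex" where
  "uu M c j = (\<Sum>s<4. M $$ (s,c) * sig $$ (s,j))"

definition WW :: "complex mat \<Rightarrow> nat \<Rightarrow> nat \<Rightarrow> complex" where
  "WW M l j = (\<Sum>c<2. cnj (nN M l c) * uu M c j)"

lemma nN_expl: "nN M a b = - (M$$(0,a) * M$$(3,b)) + M$$(1,a)*M$$(2,b) + M$$(2,a)*M$$(1,b) - M$$(3,a)*M$$(0,b)"
  unfolding nN_def by (simp add: sum4 algebra_simps)

lemma spin_entry:
  assumes M: "M \<in> carrier_mat 4 2" and i: "i < 4" and j: "j < 4"
  shows "spin_flip (M * adjm M) $$ (i,j) = (\<Sum>l<2. M $$ (i,l) * WW M l j)"
proof -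
  have d: "dim_row M = 4" "dim_col M = 2" using M by auto
  have jj: "j = 0 \<or> j = 1 \<or> j = 2 \<or> j = 3" using j by auto
  define m00 where "m00 = M $$ (0,0)"
  define m01 where "m01 = M $$ (0,1)"
  define m10 where "m10 = M $$ (1,0)"
  define m11 where "m11 = M $$ (1,1)"
  define m20 where "m20 = M $$ (2,0)"
  define m21 where "m21 = M $$ (2,1)"
  define m30 where "m30 = M $$ (3,0)"
  define m31 where "m31 = M $$ (3,1)"
  define a0 where "a0 = M $$ (i,0)"
  define a1 where "a1 = M $$ (i,1)"
  have F: "M $$ (0,0) = m00" "M $$ (0,1) = m01" "M $$ (0,Suc 0) = m01" "M $$ (1,0) = m10" "M $$ (Suc 0,0) = m10" "M $$ (1,1) = m11" "M $$ (Suc 0,Suc 0) = m11" "M $$ (2,0) = m20" "M $$ (2,1) = m21" "M $$ (2,Suc 0) = m21" "M $$ (3,0) = m30" "M $$ (3,1) = m31" "M $$ (3,Suc 0) = m31" "M $$ (i,0) = a0" "M $$ (i,1) = a1" "M $$ (i,Suc 0) = a1"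
    by (simp_all add: m00_def m01_def m10_def m11_def m20_def m21_def m30_def m31_def a0_def a1_def)
  show ?thesis
    unfolding spin_flip_def sig_def[symmetric] WW_def uu_def nN_expl
    using jj
    apply (elim disjE; hypsubst_thin)
    using i apply (simp_all add: d adjm_def scalar_prod_def sum4' sum2' sum4 sum2)
    apply (simp_all only: F)
    apply (thin_tac "i < 4", Groebner_Basis.algebra)+
    done
qed

lemma det2: assumes "A \<in> carrier_mat 2 2"
  shows "det A = A$$(0,0) * A$$(1,1) - A$$(0,1) * A$$(1,0)"
  using assms
  by (subst laplace_expansion_column[OF assms, of 0]) (auto simp: cofactor_def mat_delete_def det_single lessThan_Suc numeral_2_eq_2)

lemma det3: assumes "A \<in> carrier_mat 3 3"
  shows "det A = A$$(0,0) * (A$$(1,1) * A$$(2,2) - A$$(1,2) * A$$(2,1))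
    - A$$(1,0) * (A$$(0,1) * A$$(2,2) - A$$(0,2) * A$$(2,1))
    + A$$(2,0) * (A$$(0,1) * A$$(1,2) - A$$(0,2) * A$$(1,1))"
proof -
  have c: "mat_delete A i 0 \<in> carrier_mat 2 2" for i using mat_delete_carrier[OF assms] by simp
  show ?thesis
  using assms
  apply (subst laplace_expansion_column[OF assms, of 0], simp)
  apply (simp add: cofactor_def det2[OF c] lessThan_Suc eval_nat_numeral)
  using assms by (simp add: mat_delete_def algebra_simps)
qed

lemma det4: assumes "A \<in> carrier_mat 4 4"
  shows "det A = A$$(0,0) * (A$$(1,1) * (A$$(2,2) * A$$(3,3) - A$$(2,3) * A$$(3,2))
    - A$$(2,1) * (A$$(1,2) * A$$(3,3) - A$$(1,3) * A$$(3,2))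
    + A$$(3,1) * (A$$(1,2) * A$$(2,3) - A$$(1,3) * A$$(2,2)))
  - A$$(1,0) * (A$$(0,1) * (A$$(2,2) * A$$(3,3) - A$$(2,3) * A$$(3,2))
    - A$$(2,1) * (A$$(0,2) * A$$(3,3) - A$$(0,3) * A$$(3,2))
    + A$$(3,1) * (A$$(0,2) * A$$(2,3) - A$$(0,3) * A$$(2,2)))
  + A$$(2,0) * (A$$(0,1) * (A$$(1,2) * A$$(3,3) - A$$(1,3) * A$$(3,2))
    - A$$(1,1) * (A$$(0,2) * A$$(3,3) - A$$(0,3) * A$$(3,2))
    + A$$(3,1) * (A$$(0,2) * A$$(1,3) - A$$(0,3) * A$$(1,2)))
  - A$$(3,0) * (A$$(0,1) * (A$$(1,2) * A$$(2,3) - A$$(1,3) * A$$(2,2))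
    - A$$(1,1) * (A$$(0,2) * A$$(2,3) - A$$(0,3) * A$$(2,2))
    + A$$(2,1) * (A$$(0,2) * A$$(1,3) - A$$(0,3) * A$$(1,2)))"
proof -
  have c: "mat_delete A i 0 \<in> carrier_mat 3 3" for i using mat_delete_carrier[OF assms] by simp
  show ?thesis
  using assms
  apply (subst laplace_expansion_column[OF assms, of 0], simp)
  apply (simp add: cofactor_def det3[OF c] lessThan_Suc eval_nat_numeral)
  using assms by (simp add: mat_delete_def algebra_simps)
qed

definition BB :: "complex mat \<Rightarrow> nat \<Rightarrow> nat \<Rightarrow> complex" where
  "BB M a b = (\<Sum>i<4. WW M a i * M $$ (i,b))"

lemma spin_carrier: "M \<in> carrier_mat 4 2 \<Longrightarrow> spin_flip (M * adjm M) \<in> carrier_mat 4 4"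
  unfolding spin_flip_def sig_def[symmetric] by (auto simp: adjm_def)

lemma charpoly_eval:
  assumes M: "M \<in> carrier_mat 4 2"
  shows "poly (char_poly (spin_flip (M * adjm M))) k =
    k^2 * (k^2 - (BB M 0 0 + BB M 1 1) * k + (BB M 0 0 * BB M 1 1 - BB M 0 1 * BB M 1 0))"
proof -
  let ?A = "spin_flip (M * adjm M)"
  have A: "?A \<in> carrier_mat 4 4" using spin_carrier[OF M] .
  have C: "- char_matrix ?A k \<in> carrier_mat 4 4" using A by simp
  have E: "(- char_matrix ?A k) $$ (i,j) = (if i = j then k else 0) - (\<Sum>l<2. M $$ (i,l) * WW M l j)"
    if "i < 4" "j < 4" for i j
    using that A spin_entry[OF M that] by (auto simp: char_matrix_def)
  define m00 where "m00 = M $$ (0,0)"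
  define m01 where "m01 = M $$ (0,1)"
  define m10 where "m10 = M $$ (1,0)"
  define m11 where "m11 = M $$ (1,1)"
  define m20 where "m20 = M $$ (2,0)"
  define m21 where "m21 = M $$ (2,1)"
  define m30 where "m30 = M $$ (3,0)"
  define m31 where "m31 = M $$ (3,1)"
  define w00 where "w00 = WW M 0 0"
  define w01 where "w01 = WW M 0 1"
  define w02 where "w02 = WW M 0 2"
  define w03 where "w03 = WW M 0 3"
  define w10 where "w10 = WW M 1 0"
  define w11 where "w11 = WW M 1 1"
  define w12 where "w12 = WW M 1 2"
  define w13 where "w13 = WW M 1 3"
  have F: "M $$ (0,0) = m00" "M $$ (0,1) = m01" "M $$ (0,Suc 0) = m01" "M $$ (1,0) = m10" "M $$ (Suc 0,0) = m10" "M $$ (1,1) = m11" "M $$ (Suc 0,Suc 0) = m11" "M $$ (2,0) = m20" "M $$ (2,1) = m21" "M $$ (2,Suc 0) = m21" "M $$ (3,0) = m30" "M $$ (3,1) = m31" "M $$ (3,Suc 0) = m31" "WW M 0 0 = w00" "WW M 0 1 = w01" "WW M 0 (Suc 0) = w01" "WW M 0 2 = w02" "WW M 0 3 = w03" "WW M 1 0 = w10" "WW M (Suc 0) 0 = w10" "WW M 1 1 = w11" "WW M (Suc 0) (Suc 0) = w11" "WW M 1 2 = w12" "WW M (Suc 0) 2 = w12" "WW M 1 3 = w13" "WW M (Suc 0) 3 = w13"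
    by (simp_all add: m00_def m01_def m10_def m11_def m20_def m21_def m30_def m31_def w00_def w01_def w02_def w03_def w10_def w11_def w12_def w13_def)
  show ?thesis
    unfolding char_poly_matrix[OF A] det4[OF C] BB_def
    apply (simp add: E sum2 sum4)
    apply (simp only: F)
    apply Groebner_Basis.algebra
    done
qed


lemma uu_nN: "(\<Sum>i<4. uu M c i * M $$ (i,b)) = nN M c b"
  unfolding uu_def nN_expl by (simp add: sum4 algebra_simps)

lemma BB_eq: "BB M a b = (\<Sum>c<2. cnj (nN M a c) * nN M c b)"
  unfolding BB_def WW_def uu_nN[symmetric] by (simp add: sum2 sum4 algebra_simps)

lemma nN_sym: "nN M 0 1 = nN M 1 0"
  unfolding nN_expl by (simp add: algebra_simps)

lemma conc_from_poly:
  fixes A :: "complex mat" and T D :: real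
  assumes D: "0 \<le> D" and TD: "2*D \<le> T"
   and P: "\<And>k. poly (char_poly (spin_flip A)) k = k^2 * (k^2 - of_real T * k + of_real (D^2))"
  shows "concurrence A = sqrt (T - 2*D)"
proof -
  define s where "s = sqrt (T^2 - 4*D^2)"
  have T0: "0 \<le> T" using D TD by simp
  have TT: "4*D^2 \<le> T^2"
  proof -
    have "(2*D)^2 \<le> T^2" using D TD by (intro power_mono) auto
    thus ?thesis by (simp add: power_mult_distrib)
  qed
  have s0: "0 \<le> s" unfolding s_def using TT by simp
  have ss: "s^2 = T^2 - 4*D^2" unfolding s_def using TT by simp
  have sT: "s \<le> T"
  proof -
    have "s^2 \<le> T^2" using ss D by (simp add: )
    thus ?thesis using s0 T0 power2_le_imp_le by blast
  qed
  define r1 where "r1 = (T + s)/2"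
  define r2 where "r2 = (T - s)/2"
  have r2: "0 \<le> r2" unfolding r2_def using sT by simp
  have r12: "r2 \<le> r1" unfolding r1_def r2_def using s0 by simp
  have r1: "0 \<le> r1" using r2 r12 by simp
  have sum: "r1 + r2 = T" unfolding r1_def r2_def by (simp add: field_simps)
  have prod: "r1 * r2 = D^2" unfolding r1_def r2_def using ss by (simp add: field_simps power2_eq_square)
  have sq: "sqrt r1 * sqrt r2 = D" using prod D by (metis real_sqrt_mult real_sqrt_abs abs_of_nonneg)
  have CP: "char_poly (spin_flip A) = [:0,1:]^2 * ([:- of_real r1, 1:] * [:- of_real r2, 1:])"
  proof -
    have "poly (char_poly (spin_flip A)) = poly ([:0,1:]^2 * ([:- of_real r1, 1:] * [:- of_real r2, 1:]))"
    proof
      fix k :: complex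
      have "of_real T = (of_real r1 + of_real r2 :: complex)" using sum by (metis of_real_add)
      moreover have "of_real (D^2) = (of_real r1 * of_real r2 :: complex)" using prod by (metis of_real_mult)
      ultimately show "poly (char_poly (spin_flip A)) k = poly ([:0,1:]^2 * ([:- of_real r1, 1:] * [:- of_real r2, 1:])) k"
        unfolding P by (simp add: algebra_simps power2_eq_square)
    qed
    thus ?thesis using poly_eq_poly_eq_iff by blast
  qed
  have PR: "proots (char_poly (spin_flip A)) = {#0, 0, of_real r1, of_real r2#}"
  proof -
    have "proots ([:0,1:]^2 * ([:- of_real r1, 1:] * [:- of_real r2, 1:]) :: complex poly)
      = proots ([:0,1:]^2 :: complex poly) + (proots [:- of_real r1, 1:] + proots [:- of_real r2, 1:])"
      by (subst proots_mult, simp, simp, subst proots_mult, auto)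
    also have "proots ([:0,1:]^2 :: complex poly) = {#0,0#}"
      by (subst proots_power) (simp add: numeral_2_eq_2)
    finally show ?thesis using CP by simp
  qed
  have WL: "wootters_lambdas A = [0, 0, sqrt r2, sqrt r1]"
    unfolding wootters_lambdas_def PR using r1 r2 r12 by (auto simp: real_sqrt_le_mono)
  have "concurrence A = sqrt r1 - sqrt r2"
    unfolding concurrence_def WL using r12 by (simp add: real_sqrt_le_mono)
  also have "\<dots> = sqrt (T - 2*D)"
  proof -
    have nn: "0 \<le> sqrt r1 - sqrt r2" using r12 by (simp add: real_sqrt_le_mono)
    have "(sqrt r1 - sqrt r2)^2 = T - 2*D"
      using r1 r2 sum sq by (simp add: power2_diff)
    thus ?thesis using nn by (metis real_sqrt_unique)
  qed
  finally show ?thesis .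
qed


definition TT :: "complex mat \<Rightarrow> real" where
  "TT M = cmod (nN M 0 0)^2 + 2 * cmod (nN M 0 1)^2 + cmod (nN M 1 1)^2"
definition dN :: "complex mat \<Rightarrow> complex" where
  "dN M = nN M 0 0 * nN M 1 1 - nN M 0 1 * nN M 1 0"

lemma conc_M:
  assumes M: "M \<in> carrier_mat 4 2"
  shows "concurrence (M * adjm M) = sqrt (TT M - 2 * cmod (dN M))"
proof (rule conc_from_poly)
  define a where "a = nN M 0 0"
  define b where "b = nN M 0 1"
  define d where "d = nN M 1 1"
  have b': "nN M 1 0 = b" unfolding b_def using nN_sym by simp
  have B: "BB M 0 0 = cnj a * a + cnj b * b" "BB M 1 1 = cnj b * b + cnj d * d"
    "BB M 0 1 = cnj a * b + cnj b * d" "BB M 1 0 = cnj b * a + cnj d * b"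
  proof -
    have v: "nN M 0 0 = a" "nN M (Suc 0) 0 = b" "nN M 0 (Suc 0) = b" "nN M (Suc 0) (Suc 0) = d"
      using b' unfolding a_def b_def d_def by simp_all
    show "BB M 0 0 = cnj a * a + cnj b * b" "BB M 1 1 = cnj b * b + cnj d * d"
    "BB M 0 1 = cnj a * b + cnj b * d" "BB M 1 0 = cnj b * a + cnj d * b"
    unfolding BB_eq by (simp_all add: sum2 v)
  qed
  have dd: "dN M = a * d - b * b" unfolding dN_def a_def b_def d_def b' ..
  have nsq: "\<And>z. cnj z * z = of_real (cmod z ^ 2)" by (metis complex_norm_square mult.commute of_real_power)
  show "0 \<le> cmod (dN M)" by simp
  show "2 * cmod (dN M) \<le> TT M"
  proof -
    have "cmod (dN M) \<le> cmod a * cmod d + cmod b ^ 2"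
      unfolding dd by (metis norm_mult norm_triangle_ineq4 power2_eq_square)
    moreover have "2 * (cmod a * cmod d) \<le> cmod a ^ 2 + cmod d ^ 2"
      using sum_squares_bound[of "cmod a" "cmod d"] by (simp add: power2_eq_square)
    ultimately show ?thesis unfolding TT_def a_def[symmetric] b_def[symmetric] d_def[symmetric] by linarith
  qed
  fix k :: complex
  have t: "BB M 0 0 + BB M 1 1 = of_real (TT M)"
    unfolding B TT_def a_def[symmetric] b_def[symmetric] d_def[symmetric] nsq by simp
  have dt: "BB M 0 0 * BB M 1 1 - BB M 0 1 * BB M 1 0 = cnj (dN M) * dN M"
    unfolding B dd by (simp add: algebra_simps)
  show "poly (char_poly (spin_flip (M * adjm M))) k =
    k\<^sup>2 * (k\<^sup>2 - complex_of_real (TT M) * k + complex_of_real ((cmod (dN M))\<^sup>2))"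
    unfolding charpoly_eval[OF M] t dt nsq ..
qed


lemma sum3: "(\<Sum>i\<in>{1..(3::nat)}. f i) = f 1 + f 2 + (f 3 :: 'a::comm_monoid_add)"
  by (simp add: eval_nat_numeral atLeastAtMostSuc_conv ac_simps)

lemma pauli_idx[simp]:
  "pauli 1 $$ (0,0) = 0"
  "pauli (Suc 0) $$ (0,0) = 0"
  "pauli 1 $$ (0,1) = 1"
  "pauli 1 $$ (0,Suc 0) = 1"
  "pauli (Suc 0) $$ (0,1) = 1"
  "pauli (Suc 0) $$ (0,Suc 0) = 1"
  "pauli 1 $$ (1,0) = 1"
  "pauli 1 $$ (Suc 0,0) = 1"
  "pauli (Suc 0) $$ (1,0) = 1"
  "pauli (Suc 0) $$ (Suc 0,0) = 1"
  "pauli 1 $$ (1,1) = 0"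
  "pauli 1 $$ (1,Suc 0) = 0"
  "pauli 1 $$ (Suc 0,1) = 0"
  "pauli 1 $$ (Suc 0,Suc 0) = 0"
  "pauli (Suc 0) $$ (1,1) = 0"
  "pauli (Suc 0) $$ (1,Suc 0) = 0"
  "pauli (Suc 0) $$ (Suc 0,1) = 0"
  "pauli (Suc 0) $$ (Suc 0,Suc 0) = 0"
  "pauli 2 $$ (0,0) = 0"
  "pauli 2 $$ (0,1) = - \<i>"
  "pauli 2 $$ (0,Suc 0) = - \<i>"
  "pauli 2 $$ (1,0) = \<i>"
  "pauli 2 $$ (Suc 0,0) = \<i>"
  "pauli 2 $$ (1,1) = 0"
  "pauli 2 $$ (1,Suc 0) = 0"
  "pauli 2 $$ (Suc 0,1) = 0"
  "pauli 2 $$ (Suc 0,Suc 0) = 0"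
  "pauli 3 $$ (0,0) = 1"
  "pauli 3 $$ (0,1) = 0"
  "pauli 3 $$ (0,Suc 0) = 0"
  "pauli 3 $$ (1,0) = 0"
  "pauli 3 $$ (Suc 0,0) = 0"
  "pauli 3 $$ (1,1) = -1"
  "pauli 3 $$ (1,Suc 0) = -1"
  "pauli 3 $$ (Suc 0,1) = -1"
  "pauli 3 $$ (Suc 0,Suc 0) = -1"
  by (simp_all add: pauli_def mat_of_rows_list_def)

lemma corr_expl: "corr (mat 4 4 f) k l = Re (\<Sum>i<4. \<Sum>j<4. f (i,j) * (pauli k $$ (j div 2, i div 2) * pauli l $$ (j mod 2, i mod 2)))"
  unfolding corr_def tr_def by (simp add: scalar_prod_def kron2_def atLeast0LessThan)

definition MAB :: "complex vec \<Rightarrow> complex mat" where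
  "MAB psi = mat 4 2 (\<lambda>(r,c). psi $ (2*r + c))"
definition MAC :: "complex vec \<Rightarrow> complex mat" where
  "MAC psi = mat 4 2 (\<lambda>(r,b). psi $ (4*(r div 2) + 2*b + r mod 2))"
definition MBC :: "complex vec \<Rightarrow> complex mat" where
  "MBC psi = mat 4 2 (\<lambda>(r,a). psi $ (4*a + r))"

lemma S_T_AB_AC: "S_corr (rho_AB psi) - 3 * TT (MAB psi) = S_corr (rho_AC psi) - 3 * TT (MAC psi)"
proof -
  define x0 where "x0 = Re (psi $ 0)"
  define y0 where "y0 = Im (psi $ 0)"
  define x1 where "x1 = Re (psi $ 1)"
  define y1 where "y1 = Im (psi $ 1)"
  define x2 where "x2 = Re (psi $ 2)"
  define y2 where "y2 = Im (psi $ 2)"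
  define x3 where "x3 = Re (psi $ 3)"
  define y3 where "y3 = Im (psi $ 3)"
  define x4 where "x4 = Re (psi $ 4)"
  define y4 where "y4 = Im (psi $ 4)"
  define x5 where "x5 = Re (psi $ 5)"
  define y5 where "y5 = Im (psi $ 5)"
  define x6 where "x6 = Re (psi $ 6)"
  define y6 where "y6 = Im (psi $ 6)"
  define x7 where "x7 = Re (psi $ 7)"
  define y7 where "y7 = Im (psi $ 7)"
  have F: "Re (psi $ 0) = x0" "Im (psi $ 0) = y0" "Re (psi $ 1) = x1" "Im (psi $ 1) = y1" "Re (psi $ Suc 0) = x1" "Im (psi $ Suc 0) = y1" "Re (psi $ Suc (Suc 0)) = x2" "Im (psi $ Suc (Suc 0)) = y2" "Re (psi $ Suc (Suc (Suc 0))) = x3" "Im (psi $ Suc (Suc (Suc 0))) = y3" "Re (psi $ Suc (Suc (Suc (Suc 0)))) = x4" "Im (psi $ Suc (Suc (Suc (Suc 0)))) = y4" "Re (psi $ Suc (Suc (Suc (Suc (Suc 0))))) = x5" "Im (psi $ Suc (Suc (Suc (Suc (Suc 0))))) = y5" "Re (psi $ Suc (Suc (Suc (Suc (Suc (Suc 0)))))) = x6" "Im (psi $ Suc (Suc (Suc (Suc (Suc (Suc 0)))))) = y6" "Re (psi $ Suc (Suc (Suc (Suc (Suc (Suc (Suc 0))))))) = x7" "Im (psi $ Suc (Suc (Suc (Suc (Suc (Suc (Suc 0))))))) = y7" "Re (psi $ 2) = x2" "Im (psi $ 2) = y2" "Re (psi $ 3) = x3" "Im (psi $ 3) = y3" "Re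 (psi $ 4) = x4" "Im (psi $ 4) = y4" "Re (psi $ 5) = x5" "Im (psi $ 5) = y5" "Re (psi $ 6) = x6" "Im (psi $ 6) = y6" "Re (psi $ 7) = x7" "Im (psi $ 7) = y7"
    by (simp_all add: eval_nat_numeral x0_def y0_def x1_def y1_def x2_def y2_def x3_def y3_def x4_def y4_def x5_def y5_def x6_def y6_def x7_def y7_def)
  show ?thesis
    unfolding S_corr_def sum3 rho_AB_def rho_AC_def corr_expl TT_def nN_expl MAB_def MAC_def
    apply (simp add: sum3 sum4 sum2 cmod_power2)
    apply (simp only: F)
    apply Groebner_Basis.algebra
    done
qed

lemma S_T_AC_BC: "S_corr (rho_AC psi) - 3 * TT (MAC psi) = S_corr (rho_BC psi) - 3 * TT (MBC psi)"
proof -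
  define x0 where "x0 = Re (psi $ 0)"
  define y0 where "y0 = Im (psi $ 0)"
  define x1 where "x1 = Re (psi $ 1)"
  define y1 where "y1 = Im (psi $ 1)"
  define x2 where "x2 = Re (psi $ 2)"
  define y2 where "y2 = Im (psi $ 2)"
  define x3 where "x3 = Re (psi $ 3)"
  define y3 where "y3 = Im (psi $ 3)"
  define x4 where "x4 = Re (psi $ 4)"
  define y4 where "y4 = Im (psi $ 4)"
  define x5 where "x5 = Re (psi $ 5)"
  define y5 where "y5 = Im (psi $ 5)"
  define x6 where "x6 = Re (psi $ 6)"
  define y6 where "y6 = Im (psi $ 6)"
  define x7 where "x7 = Re (psi $ 7)"
  define y7 where "y7 = Im (psi $ 7)"
  have F: "Re (psi $ 0) = x0" "Im (psi $ 0) = y0" "Re (psi $ 1) = x1" "Im (psi $ 1) = y1" "Re (psi $ Suc 0) = x1" "Im (psi $ Suc 0) = y1" "Re (psi $ Suc (Suc 0)) = x2" "Im (psi $ Suc (Suc 0)) = y2" "Re (psi $ Suc (Suc (Suc 0))) = x3" "Im (psi $ Suc (Suc (Suc 0))) = y3" "Re (psi $ Suc (Suc (Suc (Suc 0)))) = x4" "Im (psi $ Suc (Suc (Suc (Suc 0)))) = y4" "Re (psi $ Suc (Suc (Suc (Suc (Suc 0))))) = x5" "Im (psi $ Suc (Suc (Suc (Suc (Suc 0))))) = y5" "Re (psi $ Suc (Suc (Suc (Suc (Suc (Suc 0)))))) = x6" "Im (psi $ Suc (Suc (Suc (Suc (Suc (Suc 0)))))) = y6" "Re (psi $ Suc (Suc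 (Suc (Suc (Suc (Suc (Suc 0))))))) = x7" "Im (psi $ Suc (Suc (Suc (Suc (Suc (Suc (Suc 0))))))) = y7" "Re (psi $ 2) = x2" "Im (psi $ 2) = y2" "Re (psi $ 3) = x3" "Im (psi $ 3) = y3" "Re (psi $ 4) = x4" "Im (psi $ 4) = y4" "Re (psi $ 5) = x5" "Im (psi $ 5) = y5" "Re (psi $ 6) = x6" "Im (psi $ 6) = y6" "Re (psi $ 7) = x7" "Im (psi $ 7) = y7"
    by (simp_all add: eval_nat_numeral x0_def y0_def x1_def y1_def x2_def y2_def x3_def y3_def x4_def y4_def x5_def y5_def x6_def y6_def x7_def y7_def)
  show ?thesis
    unfolding S_corr_def sum3 rho_AC_def rho_BC_def corr_expl TT_def nN_expl MAC_def MBC_def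
    apply (simp add: sum3 sum4 sum2 cmod_power2)
    apply (simp only: F)
    apply Groebner_Basis.algebra
    done
qed

lemma dN_eq: "dN (MAB psi) = dN (MAC psi) \<and> dN (MAC psi) = dN (MBC psi)"
proof -
  define p0 where "p0 = psi $ 0"
  define p1 where "p1 = psi $ 1"
  define p2 where "p2 = psi $ 2"
  define p3 where "p3 = psi $ 3"
  define p4 where "p4 = psi $ 4"
  define p5 where "p5 = psi $ 5"
  define p6 where "p6 = psi $ 6"
  define p7 where "p7 = psi $ 7"
  have F: "psi $ 0 = p0" "psi $ 1 = p1" "psi $ Suc 0 = p1" "psi $ 2 = p2" "psi $ Suc (Suc 0) = p2" "psi $ 3 = p3" "psi $ Suc (Suc (Suc 0)) = p3" "psi $ 4 = p4" "psi $ Suc (Suc (Suc (Suc 0))) = p4" "psi $ 5 = p5" "psi $ Suc (Suc (Suc (Suc (Suc 0)))) = p5" "psi $ 6 = p6" "psi $ Suc (Suc (Suc (Suc (Suc (Suc 0))))) = p6" "psi $ 7 = p7" "psi $ Suc (Suc (Suc (Suc (Suc (Suc (Suc 0)))))) = p7"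
    by (simp_all add: eval_nat_numeral p0_def p1_def p2_def p3_def p4_def p5_def p6_def p7_def)
  show ?thesis
    unfolding dN_def nN_expl MAB_def MAC_def MBC_def
    apply simp
    apply (simp only: F)
    apply (intro conjI; Groebner_Basis.algebra)
    done
qed

lemma rho_AB_eq: "dim_vec psi = 8 \<Longrightarrow> rho_AB psi = MAB psi * adjm (MAB psi)"
  by (rule eq_matI) (auto simp: rho_AB_def MAB_def adjm_def scalar_prod_def sum2' sum2)
lemma rho_AC_eq: "dim_vec psi = 8 \<Longrightarrow> rho_AC psi = MAC psi * adjm (MAC psi)"
  by (rule eq_matI) (auto simp: rho_AC_def MAC_def adjm_def scalar_prod_def sum2' sum2)
lemma rho_BC_eq: "dim_vec psi = 8 \<Longrightarrow> rho_BC psi = MBC psi * adjm (MBC psi)"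
  by (rule eq_matI) (auto simp: rho_BC_def MBC_def adjm_def scalar_prod_def sum2' sum2)


lemma TT_ge: "2 * cmod (dN M) \<le> TT M"
proof -
  define a where "a = nN M 0 0"
  define b where "b = nN M 0 1"
  define d where "d = nN M 1 1"
  have b': "nN M 1 0 = b" unfolding b_def using nN_sym by simp
  have dd: "dN M = a * d - b * b" unfolding dN_def a_def b_def d_def b' ..
  have "cmod (dN M) \<le> cmod a * cmod d + cmod b ^ 2"
    unfolding dd by (metis norm_mult norm_triangle_ineq4 power2_eq_square)
  moreover have "2 * (cmod a * cmod d) \<le> cmod a ^ 2 + cmod d ^ 2"
    using sum_squares_bound[of "cmod a" "cmod d"] by (simp add: power2_eq_square)
  ultimately show ?thesis unfolding TT_def a_def[symmetric] b_def[symmetric] d_def[symmetric] by linarith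
qed

theorem theorem2:
  fixes psi :: "complex vec"
  assumes "dim_vec psi = 8"
    and "(\<Sum>i<8. (cmod (psi $ i))\<^sup>2) = 1"
  shows "(S_corr (rho_AB psi) > S_corr (rho_AC psi) \<and> S_corr (rho_AC psi) > S_corr (rho_BC psi))
     \<longleftrightarrow> (concurrence (rho_AB psi) > concurrence (rho_AC psi) \<and>
          concurrence (rho_AC psi) > concurrence (rho_BC psi))"
proof -
  have c: "MAB psi \<in> carrier_mat 4 2" "MAC psi \<in> carrier_mat 4 2" "MBC psi \<in> carrier_mat 4 2"
    by (simp_all add: MAB_def MAC_def MBC_def)
  define D where "D = cmod (dN (MAB psi))"
  have D2: "cmod (dN (MAC psi)) = D" "cmod (dN (MBC psi)) = D" using dN_eq[of psi] unfolding D_def by simp_all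
  have cAB: "concurrence (rho_AB psi) = sqrt (TT (MAB psi) - 2 * D)"
    unfolding rho_AB_eq[OF assms(1)] conc_M[OF c(1)] D_def ..
  have cAC: "concurrence (rho_AC psi) = sqrt (TT (MAC psi) - 2 * D)"
    unfolding rho_AC_eq[OF assms(1)] conc_M[OF c(2)] D2 ..
  have cBC: "concurrence (rho_BC psi) = sqrt (TT (MBC psi) - 2 * D)"
    unfolding rho_BC_eq[OF assms(1)] conc_M[OF c(3)] D2 ..
  have s1: "S_corr (rho_AB psi) - 3 * TT (MAB psi) = S_corr (rho_AC psi) - 3 * TT (MAC psi)"
    by (rule S_T_AB_AC)
  have s2: "S_corr (rho_AC psi) - 3 * TT (MAC psi) = S_corr (rho_BC psi) - 3 * TT (MBC psi)"
    by (rule S_T_AC_BC)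
  show ?thesis unfolding cAB cAC cBC real_sqrt_less_iff using s1 s2 by linarith
qed

end
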